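(* Assume (A1), (A2) and (A3). Then for Method (BCV): (i) the number of changes of the inner index $k$ at each stage $l$ is finite (so the sequence $\{z^l\}_{l\ge0}$ is well defined); (ii) the sequence $\{z^l\}$ has limit points, and every limit point $\bar z$ belongs to $D$ and solves the variational inequality: there exists $\bar g\in\partial^{\uparrow}f(\bar z)$ with $\langle\bar g,x-\bar z\rangle\ge0$ for all $x\in D$; (iii) if in addition $f$ is semi-convex on $X$, then $\lim_{l\to\infty}f(z^l)=f^*$ and every limit point of $\{z^l\}$ belongs to $D^*$.
   Context: Setting: limit problem $\min_{x\in D}f(x)$ with $D=\{x\in X:\langle a,x\rangle=\beta\}$, $X=\prod_{i=1}^n[\alpha'_i,\alpha''_i]$; $f^*=\inf_{x\in D}f(x)$ and $D^*$ is its solution set. Approximating problems $\min_{x\in D_l}f_l(x)$, $l=0,1,2,\dots$, with $D_l=\{x\in X_l:\langle a^l,x\rangle=\beta_l\}$, $X_l=\prod_{i=1}^n[\alpha'_{il},\alpha''_{il}]$, $a^l=(a_{1l},\dots,a_{nl})^\top$. (A1): $D\ne\varnothing$, $X$ bounded, $a_i>0$ for all $i\in I=\{1,\dots,n\}$, and $f:\mathbb{R}^n\to\mathbb{R}$ is Lipschitz continuous in a neighborhood of every point of $X$. (A2): for each $l$, $D_l\neq\varnothing$, $a_{il}>0$ and $-\infty<\alpha'_{il}<\alpha''_{il}<+\infty$ for all $i$; and $\alpha'_{il}\to\alpha'_i$, $\alpha''_{il}\to\alpha''_i$, $a^l\to a$, $\beta_l\to\beta$ as $l\to\infty$. (A3):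 each $f_l$ is continuously differentiable on (a neighborhood of) $X_l$, and whenever $y^l\in D_l$ and $y^l\to\bar y$, the gradients satisfy $\nabla f_l(y^l)\to\bar g$ for some $\bar g\in\partial^{\uparrow}f(\bar y)$. Clarke notions: $f^{\uparrow}(x;p)=\limsup_{y\to x,\ \alpha\searrow0}(f(y+\alpha p)-f(y))/\alpha$ and $\partial^{\uparrow}f(x)=\{g:\langle g,p\rangle\le f^{\uparrow}(x;p)\ \forall p\}$. $f$ is semi-convex on $X$ if for all $x,y\in X$, $f^{\uparrow}(x;y-x)\ge0$ implies $f(y)\ge f(x)$. Notation: $g_{il}(x)=\partial f_l(x)/\partial x_i$, $h_{il}(x)=g_{il}(x)/a_{il}$; given positive sequence $\{\varepsilon_l\}$, $I_l^-(x)=\{i\in I: x_i\ge\alpha'_{il}+\varepsilon_l/a_{il}\}$, $I_l^+(x)=\{i\in I: x_i\le\alpha''_{il}-\varepsilon_l/a_{il}\}$; $\pi_V$ is Euclidean projection onto $V$. Method (BCV): choose $z^0\in D_0$, $\sigma\in(0,1)$, $\theta\in(0,1)$, positive sequences $\delta_l\searrow0$, $\varepsilon_l\searrow0$; set $l=1$. Stage $l$: set $k=0$, $x^0=\pi_{D_l}(z^{l-1})$. Step 1: if there exist $i\in I_l^-(x^k)$, $j\in I_l^+(x^k)$ with $h_{il}(x^k)-h_{jl}(x^k)\ge\delta_l$, choose any such pair, set $i_k=i$, $j_k=j$, $\gamma_k=\min\{a_{il}(x^k_i-\alpha'_{il}),\,a_{jl}(\alpha''_{jl}-x^k_j)\}$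 and go to Step 2; otherwise set $z^l=x^k$, $l:=l+1$ and start the next stage. Step 2: define $d^k$ by $d^k_i=-1/a_{il}$, $d^k_j=1/a_{jl}$, $d^k_s=0$ for $s\ne i,j$; let $m$ be the smallest nonnegative integer with $f_l(x^k+\theta^m\gamma_kd^k)\le f_l(x^k)+\sigma\theta^m\gamma_k\langle\nabla f_l(x^k),d^k\rangle$; set $\lambda_k=\theta^m\gamma_k$, $x^{k+1}=x^k+\lambda_kd^k$, $k:=k+1$, and return to Step 1. *)

theory Defs
  imports "HOL-Analysis.Analysis" "HOL-Library.Liminf_Limsup"
begin

definition clarke_dd :: "('a::real_normed_vector \<Rightarrow> real) \<Rightarrow> 'a \<Rightarrow> 'a \<Rightarrow> ereal" where
  "clarke_dd f x p =
     Limsup (at (x, 0) within (UNIV \<times> {0<..}))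
            (\<lambda>(y, \<alpha>::real). ereal ((f (y + \<alpha> *\<^sub>R p) - f y) / \<alpha>))"

definition clarke_subdiff :: "('a::real_inner \<Rightarrow> real) \<Rightarrow> 'a \<Rightarrow> 'a set" where
  "clarke_subdiff f x = {g. \<forall>p. ereal (inner g p) \<le> clarke_dd f x p}"

definition semiconvex_on :: "('a::real_inner \<Rightarrow> real) \<Rightarrow> 'a set \<Rightarrow> bool" where
  "semiconvex_on f X \<longleftrightarrow>
     (\<forall>x\<in>X. \<forall>y\<in>X. clarke_dd f x (y - x) \<ge> 0 \<longrightarrow> f y \<ge> f x)"

definition boxset :: "real^'n \<Rightarrow> real^'n \<Rightarrow> (real^'n) set" where
  "boxset lo hi = {x. \<forall>i. lo$i \<le> x$i \<and> x$i \<le> hi$i}"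

definition feas :: "real^'n \<Rightarrow> real^'n \<Rightarrow> real^'n \<Rightarrow> real \<Rightarrow> (real^'n) set" where
  "feas lo hi a b = {x \<in> boxset lo hi. inner a x = b}"

definition Iminus :: "real^'n \<Rightarrow> real^'n \<Rightarrow> real \<Rightarrow> real^'n \<Rightarrow> 'n set" where
  "Iminus lo a eps x = {i. x$i \<ge> lo$i + eps / a$i}"

definition Iplus :: "real^'n \<Rightarrow> real^'n \<Rightarrow> real \<Rightarrow> real^'n \<Rightarrow> 'n set" where
  "Iplus hi a eps x = {i. x$i \<le> hi$i - eps / a$i}"

definition bcv_pair :: "real^'n \<Rightarrow> real^'n \<Rightarrow> real^'n \<Rightarrow> (real^'n \<Rightarrow> real^'n)
    \<Rightarrow> real \<Rightarrow> real \<Rightarrow> real^'n \<Rightarrow> 'n \<Rightarrow> 'n \<Rightarrow> bool" where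
  "bcv_pair lo hi a g eps del x i j \<longleftrightarrow>
     i \<in> Iminus lo a eps x \<and> j \<in> Iplus hi a eps x \<and>
     (g x)$i / a$i - (g x)$j / a$j \<ge> del"

definition bcv_stop :: "real^'n \<Rightarrow> real^'n \<Rightarrow> real^'n \<Rightarrow> (real^'n \<Rightarrow> real^'n)
    \<Rightarrow> real \<Rightarrow> real \<Rightarrow> real^'n \<Rightarrow> bool" where
  "bcv_stop lo hi a g eps del x \<longleftrightarrow> \<not> (\<exists>i j. bcv_pair lo hi a g eps del x i j)"

text \<open>Parameters: lo, hi, a = bounds and coefficient vector of D_l; fl = f_l; g = gradient of f_l;
  eps = eps_l; del = delta_l; sig = sigma; th = theta.\<close>
definition bcv_step :: "real^'n \<Rightarrow> real^'n \<Rightarrow> real^'n \<Rightarrow> (real^'n \<Rightarrow> real) \<Rightarrow> (real^'n \<Rightarrow> real^'n)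
    \<Rightarrow> real \<Rightarrow> real \<Rightarrow> real \<Rightarrow> real \<Rightarrow> real^'n \<Rightarrow> real^'n \<Rightarrow> bool" where
  "bcv_step lo hi a fl g eps del sig th x x' \<longleftrightarrow>
     (\<exists>i j. bcv_pair lo hi a g eps del x i j \<and>
        (let \<gamma> = min (a$i * (x$i - lo$i)) (a$j * (hi$j - x$j));
             d = (\<chi> s. if s = i then - 1 / a$i else if s = j then 1 / a$j else 0) :: real^'n;
             arm = (\<lambda>m::nat. fl (x + (th ^ m * \<gamma>) *\<^sub>R d) \<le> fl x + sig * th ^ m * \<gamma> * inner (g x) d)
         in \<exists>m. arm m \<and> (\<forall>m'<m. \<not> arm m') \<and> x' = x + (th ^ m * \<gamma>) *\<^sub>R d))"

end

theory Submission imports Defs begin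

lemma boxset_cbox: "boxset lo hi = cbox lo hi"
  by (auto simp: boxset_def mem_box_cart)

lemma feas_alt: "feas lo hi a b = cbox lo hi \<inter> {x. inner a x = b}"
  by (auto simp: feas_def boxset_cbox)

lemma compact_feas: "compact (feas lo hi a b)"
  unfolding feas_alt by (intro compact_Int_closed compact_cbox closed_hyperplane)

definition gam :: "real^'n \<Rightarrow> real^'n \<Rightarrow> real^'n \<Rightarrow> real^'n \<Rightarrow> 'n \<Rightarrow> 'n \<Rightarrow> real" where
  "gam lo hi a x i j = min (a$i * (x$i - lo$i)) (a$j * (hi$j - x$j))"

definition dir :: "real^'n \<Rightarrow> 'n \<Rightarrow> 'n \<Rightarrow> real^'n" where
  "dir a i j = (\<chi> s. if s = i then - 1 / a$i else if s = j then 1 / a$j else 0)"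

lemma bcv_step_alt:
  "bcv_step lo hi a fl g eps del sig th x x' \<longleftrightarrow>
    (\<exists>i j. bcv_pair lo hi a g eps del x i j \<and>
      (\<exists>m. fl (x + (th ^ m * gam lo hi a x i j) *\<^sub>R dir a i j) \<le> fl x + sig * th ^ m * gam lo hi a x i j * inner (g x) (dir a i j)
        \<and> (\<forall>m'<m. \<not> fl (x + (th ^ m' * gam lo hi a x i j) *\<^sub>R dir a i j) \<le> fl x + sig * th ^ m' * gam lo hi a x i j * inner (g x) (dir a i j))
        \<and> x' = x + (th ^ m * gam lo hi a x i j) *\<^sub>R dir a i j))"
  unfolding bcv_step_def Let_def gam_def dir_def by simp

lemma dir_axis: "i \<noteq> j \<Longrightarrow> dir a i j = (- 1 / a$i) *\<^sub>R axis i 1 + (1 / a$j) *\<^sub>R axis j 1"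
  by (auto simp: dir_def vec_eq_iff axis_def)

lemma inner_dir: "i \<noteq> j \<Longrightarrow> inner v (dir a i j) = - v$i / a$i + v$j / a$j"
  by (simp add: dir_axis inner_add_right inner_diff_right inner_axis)

lemma norm_dir: "i \<noteq> j \<Longrightarrow> norm (dir a i j) \<le> \<bar>1 / a$i\<bar> + \<bar>1 / a$j\<bar>"
  unfolding dir_axis by (rule order_trans[OF norm_triangle_ineq]) (simp add: norm_axis_1)

lemma dir_nz: "i \<noteq> j \<Longrightarrow> a$i > 0 \<Longrightarrow> dir a i j \<noteq> 0"
  by (auto simp: dir_def vec_eq_iff)

locale stage =
  fixes lo hi a :: "real^'n" and b :: real and fl :: "real^'n \<Rightarrow> real"
    and g :: "real^'n \<Rightarrow> real^'n" and eps del sig th :: real and U :: "(real^'n) set"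
  assumes apos: "\<And>i. a$i > 0"
    and U: "open U" "cbox lo hi \<subseteq> U"
    and der: "\<And>x. x \<in> U \<Longrightarrow> GDERIV fl x :> g x"
    and gcont: "continuous_on U g"
    and sig: "0 < sig" "sig < 1" and th: "0 < th" "th < 1"
    and eps: "eps > 0" and del: "del > 0"
begin

abbreviation "F \<equiv> feas lo hi a b"
abbreviation "step \<equiv> bcv_step lo hi a fl g eps del sig th"

lemma pair_facts:
  assumes "bcv_pair lo hi a g eps del x i j"
  shows "i \<noteq> j" "gam lo hi a x i j \<ge> eps" "inner (g x) (dir a i j) \<le> - del"
proof -
  from assms have i: "x$i \<ge> lo$i + eps / a$i" and j: "x$j \<le> hi$j - eps / a$j"
    and h: "(g x)$i / a$i - (g x)$j / a$j \<ge> del"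
    by (auto simp: bcv_pair_def Iminus_def Iplus_def)
  show ij: "i \<noteq> j" using h del by auto
  have ai: "a$i > 0" "a$j > 0" using apos by auto
  have "a$i * (x$i - lo$i) \<ge> a$i * (eps / a$i)"
    using i ai by (intro mult_left_mono) auto
  moreover have "a$j * (hi$j - x$j) \<ge> a$j * (eps / a$j)"
    using j ai by (intro mult_left_mono) auto
  ultimately show "gam lo hi a x i j \<ge> eps" using ai by (simp add: gam_def)
  show "inner (g x) (dir a i j) \<le> - del" using h by (simp add: inner_dir[OF ij])
qed

lemma seg_feas:
  assumes x: "x \<in> F" and p: "bcv_pair lo hi a g eps del x i j"
    and t: "0 \<le> t" "t \<le> gam lo hi a x i j"
  shows "x + t *\<^sub>R dir a i j \<in> F"
proof -
  have ij: "i \<noteq> j" using pair_facts[OF p] by auto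
  have ai: "a$i > 0" "a$j > 0" using apos by auto
  have t1: "t \<le> a$i * (x$i - lo$i)" "t \<le> a$j * (hi$j - x$j)" using t by (auto simp: gam_def)
  have xb: "\<And>s. lo$s \<le> x$s \<and> x$s \<le> hi$s" using x by (auto simp: feas_def boxset_def)
  have c1: "lo$i \<le> x$i - t / a$i"
    using t1 ai by (simp add: field_simps)
  have c2: "x$j + t / a$j \<le> hi$j"
    using t1 ai by (simp add: field_simps)
  have "\<And>s. lo$s \<le> (x + t *\<^sub>R dir a i j)$s \<and> (x + t *\<^sub>R dir a i j)$s \<le> hi$s"
    using xb c1 c2 t ai ij by (auto simp: dir_def) (smt (verit) divide_nonneg_pos xb)+
  moreover have "inner a (x + t *\<^sub>R dir a i j) = b"
    using x ai ij by (simp add: inner_add_right inner_dir feas_def)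
  ultimately show ?thesis by (simp add: feas_def boxset_def)
qed

lemma F_U: "F \<subseteq> U" using U by (auto simp: feas_alt)

lemma phi_deriv:
  assumes "x + t *\<^sub>R d \<in> U"
  shows "((\<lambda>s. fl (x + s *\<^sub>R d)) has_real_derivative inner (g (x + t *\<^sub>R d)) d) (at t)"
proof -
  have 1: "((\<lambda>s. x + s *\<^sub>R d) has_derivative (\<lambda>h. h *\<^sub>R d)) (at t)"
    by (auto intro!: derivative_eq_intros)
  have 2: "(fl has_derivative (\<lambda>h. inner h (g (x + t *\<^sub>R d)))) (at (x + t *\<^sub>R d))"
    using der[OF assms] by (simp add: gderiv_def)
  have "((\<lambda>s. fl (x + s *\<^sub>R d)) has_derivative (\<lambda>h. inner (h *\<^sub>R d) (g (x + t *\<^sub>R d)))) (at t)"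
    using has_derivative_compose[OF 1 2] by simp
  moreover have "(\<lambda>h. inner (h *\<^sub>R d) (g (x + t *\<^sub>R d))) = (*) (inner (g (x + t *\<^sub>R d)) d)"
    by (auto simp: inner_commute)
  ultimately show ?thesis by (simp add: has_field_derivative_def)
qed

lemma armijo_exists:
  assumes x: "x \<in> F" and p: "bcv_pair lo hi a g eps del x i j"
  shows "\<exists>m. fl (x + (th ^ m * gam lo hi a x i j) *\<^sub>R dir a i j) \<le> fl x + sig * th ^ m * gam lo hi a x i j * inner (g x) (dir a i j)"
proof -
  define d where "d = dir a i j"
  define \<gamma> where "\<gamma> = gam lo hi a x i j"
  define q where "q = inner (g x) d"
  have q: "q \<le> - del" "\<gamma> \<ge> eps" using pair_facts[OF p] by (auto simp: q_def d_def \<gamma>_def)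
  have "x + 0 *\<^sub>R d \<in> U" using x F_U by auto
  from phi_deriv[OF this] have "((\<lambda>s. fl (x + s *\<^sub>R d)) has_real_derivative q) (at 0 within {0<..})"
    by (auto simp: q_def intro: has_field_derivative_at_within)
  hence "((\<lambda>s. (fl (x + s *\<^sub>R d) - fl (x + 0 *\<^sub>R d)) / (s - 0)) \<longlongrightarrow> q) (at_right 0)"
    by (simp add: has_field_derivative_iff)
  moreover have "q < sig * q" using q sig del by (simp add: mult_less_cancel_right2) 
  ultimately have ev: "\<forall>\<^sub>F s in at_right 0. (fl (x + s *\<^sub>R d) - fl x) / s < sig * q"
    using order_tendstoD(2) by fastforce
  have lim: "(\<lambda>m. th ^ m * \<gamma>) \<longlonglongrightarrow> 0"
    using th by (intro tendsto_mult_left_zero LIMSEQ_power_zero) auto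
  have "filterlim (\<lambda>m. th ^ m * \<gamma>) (at_right 0) sequentially"
    using th q eps by (intro tendsto_imp_filterlim_at_right[OF lim]) auto
  from eventually_compose_filterlim[OF ev this]
  obtain m where "(fl (x + (th ^ m * \<gamma>) *\<^sub>R d) - fl x) / (th ^ m * \<gamma>) < sig * q"
    by (auto simp: eventually_sequentially)
  moreover have "th ^ m * \<gamma> > 0" using th q eps by auto
  ultimately have "fl (x + (th ^ m * \<gamma>) *\<^sub>R d) - fl x < sig * q * (th ^ m * \<gamma>)"
    by (simp add: divide_less_eq)
  thus ?thesis unfolding d_def \<gamma>_def q_def by (intro exI[of _ m]) (simp add: algebra_simps)
qed

lemma step_feas:
  assumes "x \<in> F" "step x x'" shows "x' \<in> F"
proof -
  from assms(2) obtain i j m where p: "bcv_pair lo hi a g eps del x i j"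
    and x': "x' = x + (th ^ m * gam lo hi a x i j) *\<^sub>R dir a i j"
    unfolding bcv_step_alt by blast
  have "gam lo hi a x i j \<ge> 0" using pair_facts[OF p] eps by auto
  moreover have "th ^ m \<le> 1" "th ^ m \<ge> 0" using th by (auto simp: power_le_one)
  ultimately have "0 \<le> th ^ m * gam lo hi a x i j" "th ^ m * gam lo hi a x i j \<le> gam lo hi a x i j"
    by (auto simp: mult_left_le_one_le)
  thus ?thesis using seg_feas[OF assms(1) p] x' by auto
qed

lemma steps_feas:
  assumes "step\<^sup>*\<^sup>* x y" "x \<in> F" shows "y \<in> F"
  using assms by induction (auto intro: step_feas)

lemma step_exists:
  assumes "x \<in> F" "\<not> bcv_stop lo hi a g eps del x" shows "\<exists>x'. step x x'"
proof -
  from assms(2) obtain i j where p: "bcv_pair lo hi a g eps del x i j" by (auto simp: bcv_stop_def)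
  define A where "A = (\<lambda>m. fl (x + (th ^ m * gam lo hi a x i j) *\<^sub>R dir a i j) \<le> fl x + sig * th ^ m * gam lo hi a x i j * inner (g x) (dir a i j))"
  have "\<exists>m. A m" using armijo_exists[OF assms(1) p] by (simp add: A_def)
  hence "A (LEAST m. A m)" "\<forall>m'<(LEAST m. A m). \<not> A m'" by (auto intro: LeastI_ex dest: not_less_Least)
  thus ?thesis unfolding bcv_step_alt using p by (auto simp: A_def)
qed

definition "Kc = (\<Sum>s\<in>UNIV. 1 / a$s)"

lemma Kc_pos: "Kc > 0"
  unfolding Kc_def using apos by (intro sum_pos) auto

lemma norm_dir_K: "i \<noteq> j \<Longrightarrow> norm (dir a i j) \<le> Kc"
proof -
  assume ij: "i \<noteq> j"
  have "norm (dir a i j) \<le> 1/a$i + 1/a$j" using norm_dir[OF ij, of a] apos[of i] apos[of j] by simp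
  also have "\<dots> = (\<Sum>s\<in>{i,j}. 1 / a$s)" using ij by simp
  also have "\<dots> \<le> Kc" unfolding Kc_def using apos by (intro sum_mono2) (auto simp: less_imp_le)
  finally show ?thesis .
qed

lemma step_progress: "\<exists>c>0. \<forall>x x'. x \<in> F \<and> step x x' \<longrightarrow> fl x' \<le> fl x - c"
proof -
  define \<eta> where "\<eta> = (1 - sig) * del / Kc"
  have \<eta>: "\<eta> > 0" using sig del Kc_pos by (simp add: \<eta>_def)
  have "uniformly_continuous_on (cbox lo hi) g"
    using gcont U by (intro compact_uniformly_continuous) (auto intro: continuous_on_subset)
  then obtain \<rho> where \<rho>: "\<rho> > 0" and uc: "\<And>x y. x \<in> cbox lo hi \<Longrightarrow> y \<in> cbox lo hi \<Longrightarrow> dist y x < \<rho> \<Longrightarrow> dist (g y) (g x) < \<eta>"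
    unfolding uniformly_continuous_on_def using \<eta> by metis
  define lm where "lm = min eps (th * \<rho> / Kc)"
  have lm: "lm > 0" using eps th \<rho> Kc_pos by (simp add: lm_def)
  have "fl x' \<le> fl x - sig * del * lm" if x: "x \<in> F" and st: "step x x'" for x x'
  proof -
    from st obtain i j m where p: "bcv_pair lo hi a g eps del x i j"
      and arm: "fl (x + (th ^ m * gam lo hi a x i j) *\<^sub>R dir a i j) \<le> fl x + sig * th ^ m * gam lo hi a x i j * inner (g x) (dir a i j)"
      and mini: "\<forall>m'<m. \<not> fl (x + (th ^ m' * gam lo hi a x i j) *\<^sub>R dir a i j) \<le> fl x + sig * th ^ m' * gam lo hi a x i j * inner (g x) (dir a i j)"
      and x': "x' = x + (th ^ m * gam lo hi a x i j) *\<^sub>R dir a i j"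
      unfolding bcv_step_alt by blast
    define d where "d = dir a i j"
    define \<gamma> where "\<gamma> = gam lo hi a x i j"
    define q where "q = inner (g x) d"
    have ij: "i \<noteq> j" and q: "q \<le> - del" and ge: "\<gamma> \<ge> eps" using pair_facts[OF p] by (auto simp: q_def d_def \<gamma>_def)
    have nd: "norm d \<le> Kc" "norm d > 0" using norm_dir_K[OF ij] dir_nz[OF ij apos] by (auto simp: d_def)
    have "th ^ m * \<gamma> \<ge> lm"
    proof (cases m)
      case 0 thus ?thesis using ge by (simp add: lm_def)
    next
      case (Suc k)
      define t where "t = th ^ k * \<gamma>"
      have t: "t > 0" "t \<le> \<gamma>" using th ge eps by (auto simp: t_def power_le_one mult_left_le_one_le)
      have na: "fl (x + t *\<^sub>R d) > fl x + sig * t * q"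
        using mini Suc by (auto simp: t_def d_def \<gamma>_def q_def mult.assoc)
      have seg: "x + s *\<^sub>R d \<in> F" if "0 \<le> s" "s \<le> t" for s
        using seg_feas[OF x p, of s] that t by (auto simp: d_def \<gamma>_def)
      have "\<exists>\<xi>>0. \<xi> < t \<and> fl (x + t *\<^sub>R d) - fl (x + 0 *\<^sub>R d) = (t - 0) * inner (g (x + \<xi> *\<^sub>R d)) d"
        using t seg F_U by (intro MVT2 phi_deriv) auto
      then obtain \<xi> where \<xi>: "\<xi> > 0" "\<xi> < t" and mv: "fl (x + t *\<^sub>R d) - fl x = t * inner (g (x + \<xi> *\<^sub>R d)) d"
        by auto
      define y where "y = x + \<xi> *\<^sub>R d"
      have yF: "y \<in> F" using seg[of \<xi>] \<xi> by (auto simp: y_def)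
      have "t * inner (g y) d > t * (sig * q)" using na mv by (simp add: y_def algebra_simps)
      hence "inner (g y) d > sig * q" using t by simp
      hence "inner (g y - g x) d > (1 - sig) * (- q)" by (simp add: inner_diff_left q_def algebra_simps)
      moreover have "(1 - sig) * (- q) \<ge> (1 - sig) * del" using q sig by (intro mult_left_mono) auto
      moreover have "inner (g y - g x) d \<le> norm (g y - g x) * Kc"
        using Cauchy_Schwarz_ineq2[of "g y - g x" d] nd
        by (smt (verit) mult_left_mono norm_ge_zero)
      ultimately have "norm (g y - g x) * Kc > (1 - sig) * del" by linarith
      hence "norm (g y - g x) > \<eta>" using Kc_pos by (simp add: \<eta>_def pos_divide_less_eq)
      hence "\<not> dist y x < \<rho>" using uc[of x y] x yF by (auto simp: feas_alt dist_norm)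
      hence "\<rho> \<le> \<xi> * norm d" using \<xi> by (simp add: y_def dist_norm)
      also have "\<dots> \<le> \<xi> * Kc" using nd \<xi> by (intro mult_left_mono) auto
      finally have "\<rho> / Kc \<le> \<xi>" using Kc_pos by (simp add: divide_le_eq)
      hence "th * (\<rho> / Kc) \<le> th * t" using \<xi> th by (intro mult_left_mono) auto
      thus ?thesis using Suc by (simp add: lm_def t_def)
    qed
    moreover have "fl x' \<le> fl x + sig * (th ^ m * \<gamma>) * q"
      using arm x' by (simp add: d_def \<gamma>_def q_def mult.assoc)
    moreover have "sig * (th ^ m * \<gamma>) * q \<le> - (sig * del * (th ^ m * \<gamma>))"
    proof -
      have "sig * (th ^ m * \<gamma>) \<ge> 0" using sig th ge eps by auto
      hence "sig * (th ^ m * \<gamma>) * q \<le> sig * (th ^ m * \<gamma>) * (- del)" using q by (intro mult_left_mono)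
      thus ?thesis by (simp add: mult_ac)
    qed
    moreover have "sig * del * lm \<le> sig * del * (th ^ m * \<gamma>)"
      using calculation(1) sig del by (intro mult_left_mono) auto
    ultimately show ?thesis by linarith
  qed
  thus ?thesis using sig del lm by (intro exI[of _ "sig * del * lm"]) auto
qed

lemma no_infinite:
  assumes "s 0 \<in> F" shows "\<not> (\<forall>k. step (s k) (s (Suc k)))"
proof
  assume st: "\<forall>k. step (s k) (s (Suc k))"
  obtain c where c: "c > 0" "\<And>x x'. x \<in> F \<Longrightarrow> step x x' \<Longrightarrow> fl x' \<le> fl x - c"
    using step_progress by blast
  have sF: "s k \<in> F" for k by (induction k) (use assms st step_feas in auto)
  have dec: "fl (s k) \<le> fl (s 0) - real k * c" for k
  proof (induction k)
    case (Suc k) thus ?case using c(2)[OF sF st[rule_format, of k]] by (simp add: algebra_simps)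
  qed simp
  have "continuous_on F fl"
    using F_U der by (intro has_derivative_continuous_on) (auto simp: gderiv_def intro: has_derivative_at_withinI)
  hence "compact (fl ` F)" using compact_feas by (rule compact_continuous_image)
  hence "bounded (fl ` F)" by (rule compact_imp_bounded)
  then obtain B where B: "\<And>x. x \<in> F \<Longrightarrow> \<bar>fl x\<bar> \<le> B" by (auto simp: bounded_real)
  obtain k :: nat where "real k > (fl (s 0) + B + 1) / c" using reals_Archimedean2 by blast
  hence "real k * c > fl (s 0) + B + 1" using c by (simp add: divide_less_eq)
  with dec[of k] B[OF sF[of k]] show False by linarith
qed

end


lemma norm_le_inner_pos:
  fixes v av :: "real^'n"
  assumes "\<And>i. v$i \<ge> 0" "\<And>i. av$i > 0"
  shows "norm v \<le> inner av v * (\<Sum>i\<in>UNIV. 1 / av$i)"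
proof -
  have "norm v \<le> (\<Sum>i\<in>UNIV. \<bar>v$i\<bar>)" by (rule norm_le_l1_cart)
  also have "\<dots> \<le> (\<Sum>i\<in>UNIV. inner av v * (1 / av$i))"
  proof (intro sum_mono)
    fix i
    have "av$i * v$i \<le> (\<Sum>j\<in>UNIV. av$j * v$j)"
      using assms by (intro member_le_sum) (auto intro: mult_nonneg_nonneg less_imp_le)
    hence "av$i * v$i \<le> inner av v" by (simp add: inner_vec_def)
    thus "\<bar>v$i\<bar> \<le> inner av v * (1 / av$i)" using assms[of i]
      by (simp add: pos_le_divide_eq mult.commute)
  qed
  also have "\<dots> = inner av v * (\<Sum>i\<in>UNIV. 1 / av$i)" by (simp add: sum_distrib_left)
  finally show ?thesis .
qed

lemma inner_mono_pos:
  fixes u v av :: "real^'n"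
  assumes "\<And>i. u$i \<le> v$i" "\<And>i. av$i > 0"
  shows "inner av u \<le> inner av v"
  unfolding inner_vec_def using assms by (intro sum_mono) (simp add: less_imp_le mult_left_mono)

lemma approx_feas:
  fixes alo ahi av :: "nat \<Rightarrow> real^'n" and lo hi a x :: "real^'n"
  assumes ne: "\<And>l. feas (alo l) (ahi l) (av l) (bl l) \<noteq> {}"
    and apos: "\<And>l i. av l $ i > 0" and apos0: "\<And>i. a $ i > 0"
    and lims: "alo \<longlonglongrightarrow> lo" "ahi \<longlonglongrightarrow> hi" "av \<longlonglongrightarrow> a" "bl \<longlonglongrightarrow> \<beta>"
    and x: "x \<in> feas lo hi a \<beta>"
  shows "\<exists>w. (\<forall>l. w l \<in> feas (alo l) (ahi l) (av l) (bl l)) \<and> w \<longlonglongrightarrow> x"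
proof -
  define c where "c l = (\<chi> i. max (alo l $ i) (min (ahi l $ i) (x $ i)))" for l
  define e where "e l = inner (av l) (c l) - bl l" for l
  define w where "w l = (if e l \<ge> 0 then c l - (e l / inner (av l) (c l - alo l)) *\<^sub>R (c l - alo l)
      else c l + (- e l / inner (av l) (ahi l - c l)) *\<^sub>R (ahi l - c l))" for l
  define S where "S l = (\<Sum>i\<in>UNIV. 1 / av l $ i)" for l
  have xb: "lo$i \<le> x$i" "x$i \<le> hi$i" "inner a x = \<beta>" for i using x by (auto simp: feas_def boxset_def)
  have cx: "c \<longlonglongrightarrow> x"
  proof -
    have "c \<longlonglongrightarrow> (\<chi> i. max (lo $ i) (min (hi $ i) (x $ i)))"
      unfolding c_def using lims by (intro tendsto_vec_lambda tendsto_max tendsto_min tendsto_vec_nth tendsto_const)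
    also have "(\<chi> i. max (lo $ i) (min (hi $ i) (x $ i))) = x" using xb by (simp add: vec_eq_iff)
    finally show ?thesis .
  qed
  have e0: "e \<longlonglongrightarrow> 0"
  proof -
    have "e \<longlonglongrightarrow> inner a x - \<beta>" unfolding e_def[abs_def] using lims cx by (intro tendsto_intros)
    thus ?thesis using xb by simp
  qed
  have S: "S \<longlonglongrightarrow> (\<Sum>i\<in>UNIV. 1 / a $ i)" unfolding S_def[abs_def]
    using lims apos0[THEN less_imp_neq] by (intro tendsto_intros) (auto simp: tendsto_vec_nth)
  have main: "w l \<in> feas (alo l) (ahi l) (av l) (bl l) \<and> norm (w l - c l) \<le> \<bar>e l\<bar> * S l" for l
  proof -
    obtain p where p: "p \<in> feas (alo l) (ahi l) (av l) (bl l)" using ne by blast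
    have pb: "alo l $ i \<le> p $ i" "p $ i \<le> ahi l $ i" "inner (av l) p = bl l" for i
      using p by (auto simp: feas_def boxset_def)
    have lh: "alo l $ i \<le> ahi l $ i" for i using pb(1,2)[of i] by linarith
    have cb: "alo l $ i \<le> c l $ i" "c l $ i \<le> ahi l $ i" for i using lh[of i] by (auto simp: c_def)
    have ilo: "inner (av l) (alo l) \<le> bl l" using pb by (metis apos inner_mono_pos)
    have ihi: "bl l \<le> inner (av l) (ahi l)" using pb by (metis apos inner_mono_pos)
    show ?thesis
    proof (cases "e l \<ge> 0")
      case True
      define D where "D = inner (av l) (c l - alo l)"
      have D: "D \<ge> e l" using ilo by (simp add: D_def e_def inner_diff_right)
      define t where "t = e l / D"
      have t: "0 \<le> t" "t \<le> 1" using True D by (auto simp: t_def divide_le_eq_1)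
      have wl: "w l = c l - t *\<^sub>R (c l - alo l)" using True by (simp add: w_def t_def D_def)
      have box: "alo l $ i \<le> w l $ i \<and> w l $ i \<le> ahi l $ i" for i
      proof -
        have "w l $ i = (1 - t) * c l $ i + t * alo l $ i" by (simp add: wl algebra_simps)
        moreover have "(1 - t) * alo l $ i \<le> (1 - t) * c l $ i" "(1 - t) * c l $ i \<le> (1 - t) * ahi l $ i"
          "t * alo l $ i \<le> t * ahi l $ i"
          using cb[of i] t lh[of i] by (auto intro: mult_left_mono)
        ultimately show ?thesis by (simp add: algebra_simps)
      qed
      have inn: "inner (av l) (w l) = bl l"
      proof (cases "D = 0")
        case True thus ?thesis using D \<open>e l \<ge> 0\<close> by (simp add: wl t_def e_def)
      next
        case False
        have "inner (av l) (w l) = inner (av l) (c l) - t * D" by (simp add: wl D_def inner_diff_right)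
        also have "t * D = e l" using False by (simp add: t_def)
        finally show ?thesis by (simp add: e_def)
      qed
      have "norm (w l - c l) = t * norm (c l - alo l)" using t by (simp add: wl)
      also have "\<dots> \<le> t * (D * S l)" using t cb apos unfolding D_def S_def
        by (intro mult_left_mono norm_le_inner_pos) auto
      also have "\<dots> \<le> \<bar>e l\<bar> * S l"
        using True D by (cases "D = 0") (auto simp: t_def)
      finally show ?thesis using box inn by (simp add: feas_def boxset_def)
    next
      case False
      define D where "D = inner (av l) (ahi l - c l)"
      have D: "D \<ge> - e l" using ihi by (simp add: D_def e_def inner_diff_right)
      define t where "t = - e l / D"
      have Dp: "D > 0" using D False by linarith
      have t: "0 \<le> t" "t \<le> 1" using False D Dp by (simp_all add: t_def field_simps)
      have wl: "w l = c l + t *\<^sub>R (ahi l - c l)" using False by (simp add: w_def t_def D_def)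
      have box: "alo l $ i \<le> w l $ i \<and> w l $ i \<le> ahi l $ i" for i
      proof -
        have "w l $ i = (1 - t) * c l $ i + t * ahi l $ i" by (simp add: wl algebra_simps)
        moreover have "(1 - t) * alo l $ i \<le> (1 - t) * c l $ i" "(1 - t) * c l $ i \<le> (1 - t) * ahi l $ i"
          "t * alo l $ i \<le> t * ahi l $ i"
          using cb[of i] t lh[of i] by (auto intro: mult_left_mono)
        ultimately show ?thesis by (simp add: algebra_simps)
      qed
      have "D \<noteq> 0" using D False by auto
      hence inn: "inner (av l) (w l) = bl l"
        by (simp add: wl t_def D_def e_def inner_diff_right inner_add_right)
      have "norm (w l - c l) = t * norm (ahi l - c l)" using t by (simp add: wl)
      also have "\<dots> \<le> t * (D * S l)" using t cb apos unfolding D_def S_def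
        by (intro mult_left_mono norm_le_inner_pos) auto
      also have "\<dots> \<le> \<bar>e l\<bar> * S l"
        using False D \<open>D \<noteq> 0\<close> by (auto simp: t_def)
      finally show ?thesis using box inn by (simp add: feas_def boxset_def)
    qed
  qed
  have "(\<lambda>l. w l - c l) \<longlonglongrightarrow> 0"
  proof (rule Lim_null_comparison)
    show "\<forall>\<^sub>F l in sequentially. norm (w l - c l) \<le> \<bar>e l\<bar> * S l" using main by auto
    show "(\<lambda>l. \<bar>e l\<bar> * S l) \<longlonglongrightarrow> 0" using tendsto_mult[OF tendsto_rabs[OF e0] S] by simp
  qed
  from tendsto_add[OF this cx] have "w \<longlonglongrightarrow> x" by simp
  thus ?thesis using main by blast
qed

lemma vi_lemma:
  fixes lo hi a gb zb :: "real^'n"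
  assumes apos: "\<And>i. a$i > 0" and zb: "zb \<in> feas lo hi a \<beta>"
    and kkt: "\<And>i j. lo$i < zb$i \<Longrightarrow> zb$j < hi$j \<Longrightarrow> gb$i / a$i \<le> gb$j / a$j"
    and x: "x \<in> feas lo hi a \<beta>"
  shows "inner gb (x - zb) \<ge> 0"
proof -
  have zbb: "lo$i \<le> zb$i" "zb$i \<le> hi$i" for i using zb by (auto simp: feas_def boxset_def)
  have xb: "lo$i \<le> x$i" "x$i \<le> hi$i" for i using x by (auto simp: feas_def boxset_def)
  have eq: "(\<Sum>i\<in>UNIV. a$i * (x$i - zb$i)) = 0"
  proof -
    have "(\<Sum>i\<in>UNIV. a$i * (x$i - zb$i)) = inner a x - inner a zb"
      by (simp add: inner_vec_def sum_subtractf algebra_simps)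
    thus ?thesis using x zb by (simp add: feas_def)
  qed
  define S where "S = {j. zb$j < hi$j}"
  show ?thesis
  proof (cases "S = {}")
    case True
    have "x$i \<le> zb$i" for i
    proof -
      have "\<not> zb$i < hi$i" using True by (auto simp: S_def)
      thus ?thesis using xb[of i] by linarith
    qed
    hence nn: "\<And>i. i \<in> UNIV \<Longrightarrow> 0 \<le> - (a$i * (x$i - zb$i))" using apos
      by (simp add: mult_nonneg_nonpos less_imp_le)
    have s0: "(\<Sum>i\<in>UNIV. - (a$i * (x$i - zb$i))) = 0" using eq by (simp add: sum_negf)
    have "((\<Sum>i\<in>UNIV. - (a$i * (x$i - zb$i))) = 0) = (\<forall>i\<in>UNIV. - (a$i * (x$i - zb$i)) = 0)"
      by (rule sum_nonneg_eq_0_iff) (use nn in auto)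
    hence "\<forall>i\<in>UNIV. - (a$i * (x$i - zb$i)) = 0" using s0 by simp
    hence "x = zb" using apos by (auto simp: vec_eq_iff) (metis less_irrefl)
    thus ?thesis by simp
  next
    case False
    define \<mu> where "\<mu> = Min ((\<lambda>j. gb$j / a$j) ` S)"
    have fin: "finite S" by simp
    have "inner gb (x - zb) = (\<Sum>i\<in>UNIV. a$i * (gb$i / a$i - \<mu>) * (x$i - zb$i) + \<mu> * (a$i * (x$i - zb$i)))"
      unfolding inner_vec_def using apos
      by (intro sum.cong refl) (simp add: field_simps less_imp_neq[symmetric])
    also have "\<dots> = (\<Sum>i\<in>UNIV. a$i * (gb$i / a$i - \<mu>) * (x$i - zb$i))"
      using eq by (simp add: sum.distrib sum_distrib_left[symmetric])
    also have "\<dots> \<ge> 0"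
    proof (intro sum_nonneg)
      fix i
      consider "x$i > zb$i" | "x$i < zb$i" | "x$i = zb$i" by linarith
      thus "0 \<le> a$i * (gb$i / a$i - \<mu>) * (x$i - zb$i)"
      proof cases
        case 1
        hence "i \<in> S" using xb[of i] by (simp add: S_def)
        hence "\<mu> \<le> gb$i / a$i" unfolding \<mu>_def using fin by (intro Min_le) auto
        thus ?thesis using 1 apos[of i] by (intro mult_nonneg_nonneg) auto
      next
        case 2
        hence "lo$i < zb$i" using xb[of i] by linarith
        hence "gb$i / a$i \<le> \<mu>" unfolding \<mu>_def using fin False kkt by (subst Min_ge_iff) (auto simp: S_def)
        hence "a$i * (gb$i / a$i - \<mu>) \<le> 0" using apos[of i] by (simp add: mult_nonneg_nonpos)
        thus ?thesis using 2 by (simp add: mult_nonpos_nonpos)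
      qed simp
    qed
    finally show ?thesis .
  qed
qed

lemma bounded_boxes:
  fixes alo ahi z :: "nat \<Rightarrow> real^'n"
  assumes "alo \<longlonglongrightarrow> lo" "ahi \<longlonglongrightarrow> hi" "\<And>l. z l \<in> cbox (alo l) (ahi l)"
  shows "bounded (range z)"
proof -
  obtain B1 where B1: "\<And>l. norm (alo l) \<le> B1"
    using convergent_imp_bounded[OF assms(1)] by (auto simp: bounded_iff)
  obtain B2 where B2: "\<And>l. norm (ahi l) \<le> B2"
    using convergent_imp_bounded[OF assms(2)] by (auto simp: bounded_iff)
  have c: "\<bar>z l $ i\<bar> \<le> B1 + B2" for l i
  proof -
    have "alo l $ i \<le> z l $ i" "z l $ i \<le> ahi l $ i" using assms(3)[of l] by (auto simp: mem_box_cart)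
    moreover have "\<bar>alo l $ i\<bar> \<le> B1" "\<bar>ahi l $ i\<bar> \<le> B2"
      using component_le_norm_cart[of "alo l" i] component_le_norm_cart[of "ahi l" i] B1[of l] B2[of l] by auto
    ultimately show ?thesis by linarith
  qed
  have "norm (z l) \<le> real CARD('n) * (B1 + B2)" for l
  proof -
    have "norm (z l) \<le> (\<Sum>i\<in>UNIV. \<bar>z l $ i\<bar>)" by (rule norm_le_l1_cart)
    also have "\<dots> \<le> (\<Sum>i\<in>(UNIV::'n set). B1 + B2)" by (intro sum_mono c)
    finally show ?thesis by simp
  qed
  thus ?thesis by (auto simp: bounded_iff)
qed

theorem theorem4p1:
  fixes lo hi a :: "real^'n" and \<beta> :: real
    and f :: "real^'n \<Rightarrow> real"
    and alo ahi av :: "nat \<Rightarrow> real^'n" and bl :: "nat \<Rightarrow> real"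
    and fl :: "nat \<Rightarrow> real^'n \<Rightarrow> real" and G :: "nat \<Rightarrow> real^'n \<Rightarrow> real^'n"
    and \<sigma> \<theta> :: real and \<delta> \<epsilon> :: "nat \<Rightarrow> real"
  assumes A1_D: "feas lo hi a \<beta> \<noteq> {}"
    and A1_X: "bounded (boxset lo hi)"
    and A1_a: "\<forall>i. a$i > 0"
    and A1_f: "\<forall>x\<in>boxset lo hi. \<exists>e>0. \<exists>L. L-lipschitz_on (ball x e) f"
    and A2_D: "\<forall>l. feas (alo l) (ahi l) (av l) (bl l) \<noteq> {}"
    and A2_a: "\<forall>l i. av l $ i > 0"
    and A2_box: "\<forall>l i. alo l $ i < ahi l $ i"
    and A2_lo: "alo \<longlonglongrightarrow> lo" and A2_hi: "ahi \<longlonglongrightarrow> hi"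
    and A2_av: "av \<longlonglongrightarrow> a" and A2_b: "bl \<longlonglongrightarrow> \<beta>"
    and A3_C1: "\<forall>l. \<exists>U. open U \<and> boxset (alo l) (ahi l) \<subseteq> U \<and>
                   (\<forall>x\<in>U. GDERIV (fl l) x :> G l x) \<and> continuous_on U (G l)"
    and A3_g: "\<forall>y yb. (\<forall>l. y l \<in> feas (alo l) (ahi l) (av l) (bl l)) \<and> y \<longlonglongrightarrow> yb \<longrightarrow>
                 (\<exists>gb\<in>clarke_subdiff f yb. (\<lambda>l. G l (y l)) \<longlonglongrightarrow> gb)"
    and sig: "0 < \<sigma>" "\<sigma> < 1" and th: "0 < \<theta>" "\<theta> < 1"
    and del: "\<forall>l. \<delta> l > 0" "decseq \<delta>" "\<delta> \<longlonglongrightarrow> 0"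
    and eps: "\<forall>l. \<epsilon> l > 0" "decseq \<epsilon>" "\<epsilon> \<longlonglongrightarrow> 0"
  shows
    \<comment> \<open>(i): at every stage l >= 1, started from x^0 = projection of z^{l-1} onto D_l,
        the inner iterations are well defined and always stop after finitely many steps\<close>
    "(\<forall>l\<ge>1. \<forall>y.
        let x0 = closest_point (feas (alo l) (ahi l) (av l) (bl l)) y;
            step = bcv_step (alo l) (ahi l) (av l) (fl l) (G l) (\<epsilon> l) (\<delta> l) \<sigma> \<theta>
        in (\<not> (\<exists>s. s 0 = x0 \<and> (\<forall>k. step (s k) (s (Suc k))))) \<and>
           (\<forall>x. step\<^sup>*\<^sup>* x0 x \<and> \<not> bcv_stop (alo l) (ahi l) (av l) (G l) (\<epsilon> l) (\<delta> l) x
                  \<longrightarrow> (\<exists>x'. step x x')))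
     \<and>
     (\<forall>z. z 0 \<in> feas (alo 0) (ahi 0) (av 0) (bl 0) \<and>
          (\<forall>l\<ge>1. (bcv_step (alo l) (ahi l) (av l) (fl l) (G l) (\<epsilon> l) (\<delta> l) \<sigma> \<theta>)\<^sup>*\<^sup>*
                     (closest_point (feas (alo l) (ahi l) (av l) (bl l)) (z (l - 1))) (z l) \<and>
                   bcv_stop (alo l) (ahi l) (av l) (G l) (\<epsilon> l) (\<delta> l) (z l))
        \<longrightarrow>
        \<comment> \<open>(ii)\<close>
        (\<exists>zb r. strict_mono r \<and> (z \<circ> r) \<longlonglongrightarrow> zb) \<and>
        (\<forall>zb r. strict_mono r \<and> (z \<circ> r) \<longlonglongrightarrow> zb \<longrightarrow>
            zb \<in> feas lo hi a \<beta> \<and>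
            (\<exists>gb\<in>clarke_subdiff f zb. \<forall>x\<in>feas lo hi a \<beta>. inner gb (x - zb) \<ge> 0)) \<and>
        \<comment> \<open>(iii)\<close>
        (semiconvex_on f (boxset lo hi) \<longrightarrow>
            (\<lambda>l. f (z l)) \<longlonglongrightarrow> (INF x\<in>feas lo hi a \<beta>. f x) \<and>
            (\<forall>zb r. strict_mono r \<and> (z \<circ> r) \<longlonglongrightarrow> zb \<longrightarrow>
               zb \<in> feas lo hi a \<beta> \<and> f zb = (INF x\<in>feas lo hi a \<beta>. f x))))"
proof -
  obtain U where U: "\<And>l. open (U l) \<and> boxset (alo l) (ahi l) \<subseteq> U l \<and>
      (\<forall>x\<in>U l. GDERIV (fl l) x :> G l x) \<and> continuous_on (U l) (G l)"
    using A3_C1 by metis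
  have stg: "stage (alo l) (ahi l) (av l) (fl l) (G l) (\<epsilon> l) (\<delta> l) \<sigma> \<theta> (U l)" for l
    unfolding stage_def using U[of l] A2_a sig th del eps by (auto simp: boxset_cbox)
  define Dl where "Dl l = feas (alo l) (ahi l) (av l) (bl l)" for l
  have cpF: "closest_point (Dl l) y \<in> Dl l" for l y
    unfolding Dl_def using A2_D compact_feas by (intro closest_point_in_set compact_imp_closed) auto
  have P1: "\<forall>l\<ge>1. \<forall>y.
        let x0 = closest_point (feas (alo l) (ahi l) (av l) (bl l)) y;
            step = bcv_step (alo l) (ahi l) (av l) (fl l) (G l) (\<epsilon> l) (\<delta> l) \<sigma> \<theta>
        in (\<not> (\<exists>s. s 0 = x0 \<and> (\<forall>k. step (s k) (s (Suc k))))) \<and>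
           (\<forall>x. step\<^sup>*\<^sup>* x0 x \<and> \<not> bcv_stop (alo l) (ahi l) (av l) (G l) (\<epsilon> l) (\<delta> l) x
                  \<longrightarrow> (\<exists>x'. step x x'))"
  proof (intro allI impI)
    fix l :: nat and y
    interpret S: stage "alo l" "ahi l" "av l" "bl l" "fl l" "G l" "\<epsilon> l" "\<delta> l" \<sigma> \<theta> "U l" by (rule stg)
    have x0: "closest_point (feas (alo l) (ahi l) (av l) (bl l)) y \<in> feas (alo l) (ahi l) (av l) (bl l)"
      using cpF by (simp add: Dl_def)
    show "let x0 = closest_point (feas (alo l) (ahi l) (av l) (bl l)) y;
            step = bcv_step (alo l) (ahi l) (av l) (fl l) (G l) (\<epsilon> l) (\<delta> l) \<sigma> \<theta>
        in (\<not> (\<exists>s. s 0 = x0 \<and> (\<forall>k. step (s k) (s (Suc k))))) \<and>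
           (\<forall>x. step\<^sup>*\<^sup>* x0 x \<and> \<not> bcv_stop (alo l) (ahi l) (av l) (G l) (\<epsilon> l) (\<delta> l) x
                  \<longrightarrow> (\<exists>x'. step x x'))"
      unfolding Let_def
    proof (intro conjI allI impI)
      show "\<not> (\<exists>s. s 0 = closest_point (feas (alo l) (ahi l) (av l) (bl l)) y \<and>
          (\<forall>k. bcv_step (alo l) (ahi l) (av l) (fl l) (G l) (\<epsilon> l) (\<delta> l) \<sigma> \<theta> (s k) (s (Suc k))))"
        using S.no_infinite x0 by metis
    next
      fix x assume "(bcv_step (alo l) (ahi l) (av l) (fl l) (G l) (\<epsilon> l) (\<delta> l) \<sigma> \<theta>)\<^sup>*\<^sup>*
          (closest_point (feas (alo l) (ahi l) (av l) (bl l)) y) x \<and>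
        \<not> bcv_stop (alo l) (ahi l) (av l) (G l) (\<epsilon> l) (\<delta> l) x"
      thus "\<exists>x'. bcv_step (alo l) (ahi l) (av l) (fl l) (G l) (\<epsilon> l) (\<delta> l) \<sigma> \<theta> x x'"
        using S.step_exists S.steps_feas x0 by blast
    qed
  qed
  moreover have "\<forall>z. z 0 \<in> feas (alo 0) (ahi 0) (av 0) (bl 0) \<and>
          (\<forall>l\<ge>1. (bcv_step (alo l) (ahi l) (av l) (fl l) (G l) (\<epsilon> l) (\<delta> l) \<sigma> \<theta>)\<^sup>*\<^sup>*
                     (closest_point (feas (alo l) (ahi l) (av l) (bl l)) (z (l - 1))) (z l) \<and>
                   bcv_stop (alo l) (ahi l) (av l) (G l) (\<epsilon> l) (\<delta> l) (z l))
        \<longrightarrow>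
        (\<exists>zb r. strict_mono r \<and> (z \<circ> r) \<longlonglongrightarrow> zb) \<and>
        (\<forall>zb r. strict_mono r \<and> (z \<circ> r) \<longlonglongrightarrow> zb \<longrightarrow>
            zb \<in> feas lo hi a \<beta> \<and>
            (\<exists>gb\<in>clarke_subdiff f zb. \<forall>x\<in>feas lo hi a \<beta>. inner gb (x - zb) \<ge> 0)) \<and>
        (semiconvex_on f (boxset lo hi) \<longrightarrow>
            (\<lambda>l. f (z l)) \<longlonglongrightarrow> (INF x\<in>feas lo hi a \<beta>. f x) \<and>
            (\<forall>zb r. strict_mono r \<and> (z \<circ> r) \<longlonglongrightarrow> zb \<longrightarrow>
               zb \<in> feas lo hi a \<beta> \<and> f zb = (INF x\<in>feas lo hi a \<beta>. f x)))"
  proof (intro allI impI)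
    fix z :: "nat \<Rightarrow> real^'n"
    assume hz: "z 0 \<in> feas (alo 0) (ahi 0) (av 0) (bl 0) \<and>
          (\<forall>l\<ge>1. (bcv_step (alo l) (ahi l) (av l) (fl l) (G l) (\<epsilon> l) (\<delta> l) \<sigma> \<theta>)\<^sup>*\<^sup>*
                     (closest_point (feas (alo l) (ahi l) (av l) (bl l)) (z (l - 1))) (z l) \<and>
                   bcv_stop (alo l) (ahi l) (av l) (G l) (\<epsilon> l) (\<delta> l) (z l))"
    have zF: "z l \<in> Dl l" for l
    proof (cases "l = 0")
      case True thus ?thesis using hz by (simp add: Dl_def)
    next
      case False
      interpret S: stage "alo l" "ahi l" "av l" "bl l" "fl l" "G l" "\<epsilon> l" "\<delta> l" \<sigma> \<theta> "U l" by (rule stg)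
      have st: "(bcv_step (alo l) (ahi l) (av l) (fl l) (G l) (\<epsilon> l) (\<delta> l) \<sigma> \<theta>)\<^sup>*\<^sup>*
                     (closest_point (feas (alo l) (ahi l) (av l) (bl l)) (z (l - 1))) (z l)"
        using hz False by simp
      show ?thesis using S.steps_feas[OF st] cpF[of l "z (l - 1)"] by (simp add: Dl_def)
    qed
    have zstop: "bcv_stop (alo l) (ahi l) (av l) (G l) (\<epsilon> l) (\<delta> l) (z l)" if "l \<ge> 1" for l
      using hz that by blast
    have bdd: "bounded (range z)"
      by (rule bounded_boxes[OF A2_lo A2_hi]) (use zF in \<open>auto simp: Dl_def feas_alt\<close>)
    have LIM: "zb \<in> feas lo hi a \<beta> \<and>
            (\<exists>gb\<in>clarke_subdiff f zb. \<forall>x\<in>feas lo hi a \<beta>. inner gb (x - zb) \<ge> 0)"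
      if r: "strict_mono r" and zr: "(z \<circ> r) \<longlonglongrightarrow> zb" for zb r
    proof -
      have zri: "(\<lambda>k. z (r k) $ i) \<longlonglongrightarrow> zb $ i" for i using tendsto_vec_nth[OF zr] by (simp add: o_def)
      have lor: "(\<lambda>k. alo (r k) $ i) \<longlonglongrightarrow> lo $ i" for i
        using tendsto_vec_nth[OF LIMSEQ_subseq_LIMSEQ[OF A2_lo r]] by (simp add: o_def)
      have hir: "(\<lambda>k. ahi (r k) $ i) \<longlonglongrightarrow> hi $ i" for i
        using tendsto_vec_nth[OF LIMSEQ_subseq_LIMSEQ[OF A2_hi r]] by (simp add: o_def)
      have avr: "(\<lambda>k. av (r k)) \<longlonglongrightarrow> a" using LIMSEQ_subseq_LIMSEQ[OF A2_av r] by (simp add: o_def)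
      have avri: "(\<lambda>k. av (r k) $ i) \<longlonglongrightarrow> a $ i" for i using tendsto_vec_nth[OF avr] by simp
      have blr: "(\<lambda>k. bl (r k)) \<longlonglongrightarrow> \<beta>" using LIMSEQ_subseq_LIMSEQ[OF A2_b r] by (simp add: o_def)
      have zrk: "z (r k) \<in> Dl (r k)" for k by (rule zF)
      have lb: "lo $ i \<le> zb $ i" for i
        by (rule tendsto_le[OF trivial_limit_sequentially zri lor]) (use zrk in \<open>auto simp: Dl_def feas_def boxset_def\<close>)
      have ub: "zb $ i \<le> hi $ i" for i
        by (rule tendsto_le[OF trivial_limit_sequentially hir zri]) (use zrk in \<open>auto simp: Dl_def feas_def boxset_def\<close>)
      have "(\<lambda>k. inner (av (r k)) (z (r k))) \<longlonglongrightarrow> inner a zb"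
        using tendsto_inner[OF avr zr[unfolded o_def]] by simp
      moreover have "(\<lambda>k. inner (av (r k)) (z (r k))) = (\<lambda>k. bl (r k))"
        using zrk by (auto simp: Dl_def feas_def)
      ultimately have "inner a zb = \<beta>" using blr LIMSEQ_unique by metis
      hence zbD: "zb \<in> feas lo hi a \<beta>" using lb ub by (simp add: feas_def boxset_def)
      obtain w where wF: "\<And>l. w l \<in> Dl l" and wl: "w \<longlonglongrightarrow> zb"
        using approx_feas[of alo ahi av bl a lo hi \<beta> zb] A2_D A2_a A1_a A2_lo A2_hi A2_av A2_b zbD
        by (auto simp: Dl_def)
      define y where "y l = (if l \<in> range r then z l else w l)" for l
      have yF: "y l \<in> Dl l" for l using zF wF by (simp add: y_def)
      have yl: "y \<longlonglongrightarrow> zb"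
        unfolding lim_sequentially
      proof (intro allI impI)
        fix e :: real assume e: "e > 0"
        obtain K where K: "\<And>k. k \<ge> K \<Longrightarrow> dist (z (r k)) zb < e"
          using zr e unfolding lim_sequentially by (auto simp: o_def)
        obtain N where N: "\<And>n. n \<ge> N \<Longrightarrow> dist (w n) zb < e"
          using wl e unfolding lim_sequentially by auto
        have "dist (y n) zb < e" if n: "n \<ge> max N (r K)" for n
        proof (cases "n \<in> range r")
          case True
          then obtain k where k: "n = r k" by auto
          have "r K \<le> r k" using n k by simp
          hence "K \<le> k" using strict_mono_less_eq[OF r] by simp
          thus ?thesis using K k True by (simp add: y_def)
        next
          case False thus ?thesis using N n by (simp add: y_def)
        qed
        thus "\<exists>no. \<forall>n\<ge>no. dist (y n) zb < e" by blast
      qed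
      from A3_g[rule_format, of y zb] yF yl obtain gb where gb: "gb \<in> clarke_subdiff f zb"
        and Gy: "(\<lambda>l. G l (y l)) \<longlonglongrightarrow> gb" by (auto simp: Dl_def)
      have Gz: "(\<lambda>k. G (r k) (z (r k))) \<longlonglongrightarrow> gb"
        using LIMSEQ_subseq_LIMSEQ[OF Gy r] by (simp add: o_def y_def)
      have Gzi: "(\<lambda>k. G (r k) (z (r k)) $ i) \<longlonglongrightarrow> gb $ i" for i using tendsto_vec_nth[OF Gz] by simp
      have epsr: "(\<lambda>k. \<epsilon> (r k)) \<longlonglongrightarrow> 0" using LIMSEQ_subseq_LIMSEQ[OF eps(3) r] by (simp add: o_def)
      have delr: "(\<lambda>k. \<delta> (r k)) \<longlonglongrightarrow> 0" using LIMSEQ_subseq_LIMSEQ[OF del(3) r] by (simp add: o_def)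
      have anz: "a $ i \<noteq> 0" for i using A1_a by (metis less_irrefl)
      have kkt: "gb$i / a$i \<le> gb$j / a$j" if i: "lo$i < zb$i" and j: "zb$j < hi$j" for i j
      proof -
        have "(\<lambda>k. z (r k) $ i - (alo (r k) $ i + \<epsilon> (r k) / av (r k) $ i)) \<longlonglongrightarrow> zb $ i - (lo $ i + 0 / a $ i)"
          using anz by (intro tendsto_intros zri lor epsr avri) auto
        hence ev1: "\<forall>\<^sub>F k in sequentially. 0 < z (r k) $ i - (alo (r k) $ i + \<epsilon> (r k) / av (r k) $ i)"
          using i by (intro order_tendstoD(1)) auto
        have "(\<lambda>k. (ahi (r k) $ j - \<epsilon> (r k) / av (r k) $ j) - z (r k) $ j) \<longlonglongrightarrow> (hi $ j - 0 / a $ j) - zb $ j"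
          using anz by (intro tendsto_intros zri hir epsr avri) auto
        hence ev2: "\<forall>\<^sub>F k in sequentially. 0 < (ahi (r k) $ j - \<epsilon> (r k) / av (r k) $ j) - z (r k) $ j"
          using j by (intro order_tendstoD(1)) auto
        have ev3: "\<forall>\<^sub>F k in sequentially. 1 \<le> r k"
          using seq_suble[OF r] by (intro eventually_sequentiallyI[of 1]) (metis order_trans)
        have "\<forall>\<^sub>F k in sequentially. G (r k) (z (r k)) $ i / av (r k) $ i - G (r k) (z (r k)) $ j / av (r k) $ j \<le> \<delta> (r k)"
          using ev1 ev2 ev3
        proof eventually_elim
          case (elim k)
          have "\<not> bcv_pair (alo (r k)) (ahi (r k)) (av (r k)) (G (r k)) (\<epsilon> (r k)) (\<delta> (r k)) (z (r k)) i j"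
            using zstop[OF elim(3)] by (auto simp: bcv_stop_def)
          thus ?case using elim(1,2) by (auto simp: bcv_pair_def Iminus_def Iplus_def)
        qed
        moreover have "(\<lambda>k. G (r k) (z (r k)) $ i / av (r k) $ i - G (r k) (z (r k)) $ j / av (r k) $ j)
            \<longlonglongrightarrow> gb $ i / a $ i - gb $ j / a $ j"
          using anz by (intro tendsto_intros Gzi avri) auto
        ultimately have "gb $ i / a $ i - gb $ j / a $ j \<le> 0"
          using tendsto_le[OF trivial_limit_sequentially delr] by blast
        thus ?thesis by simp
      qed
      have "\<forall>x\<in>feas lo hi a \<beta>. inner gb (x - zb) \<ge> 0"
        using vi_lemma[OF _ zbD kkt] A1_a by blast
      thus ?thesis using zbD gb by blast
    qed
    have EX: "\<exists>zb r. strict_mono r \<and> (z \<circ> r) \<longlonglongrightarrow> zb"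
      using bounded_imp_convergent_subsequence[OF bdd] by blast
    have P3: "(\<lambda>l. f (z l)) \<longlonglongrightarrow> (INF x\<in>feas lo hi a \<beta>. f x) \<and>
            (\<forall>zb r. strict_mono r \<and> (z \<circ> r) \<longlonglongrightarrow> zb \<longrightarrow>
               zb \<in> feas lo hi a \<beta> \<and> f zb = (INF x\<in>feas lo hi a \<beta>. f x))"
      if sc: "semiconvex_on f (boxset lo hi)"
    proof -
      have OPT: "zb \<in> feas lo hi a \<beta> \<and> f zb = (INF x\<in>feas lo hi a \<beta>. f x)"
        if r: "strict_mono r" and zr: "(z \<circ> r) \<longlonglongrightarrow> zb" for zb r
      proof -
        obtain gb where zbD: "zb \<in> feas lo hi a \<beta>" and gb: "gb \<in> clarke_subdiff f zb"
          and vi: "\<forall>x\<in>feas lo hi a \<beta>. inner gb (x - zb) \<ge> 0" using LIM[OF r zr] by blast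
        have le: "f zb \<le> f x" if x: "x \<in> feas lo hi a \<beta>" for x
        proof -
          have "ereal (inner gb (x - zb)) \<le> clarke_dd f zb (x - zb)" using gb by (simp add: clarke_subdiff_def)
          moreover have "ereal 0 \<le> ereal (inner gb (x - zb))" using vi x by simp
          ultimately have "clarke_dd f zb (x - zb) \<ge> 0" by (metis order_trans zero_ereal_def)
          thus ?thesis using sc zbD x unfolding semiconvex_on_def by (auto simp: feas_def)
        qed
        have "(INF x\<in>feas lo hi a \<beta>. f x) = f zb"
          using zbD le by (intro cInf_eq_minimum) auto
        thus ?thesis using zbD by simp
      qed
      obtain zb0 r0 where r0: "strict_mono r0" "(z \<circ> r0) \<longlonglongrightarrow> zb0" using EX by blast
      define fs where "fs = (INF x\<in>feas lo hi a \<beta>. f x)"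
      have fcont: "isCont f zb" if "zb \<in> feas lo hi a \<beta>" for zb
      proof -
        have "zb \<in> boxset lo hi" using that by (simp add: feas_def)
        then obtain e L where e: "e > 0" and L: "L-lipschitz_on (ball zb e) f" using A1_f by blast
        have "continuous_on (ball zb e) f" using L by (rule lipschitz_on_continuous_on)
        thus ?thesis using e by (simp add: continuous_on_eq_continuous_at)
      qed
      have conv: "(\<lambda>l. f (z l)) \<longlonglongrightarrow> fs"
      proof (rule ccontr)
        assume nc: "\<not> (\<lambda>l. f (z l)) \<longlonglongrightarrow> fs"
        then obtain e where e: "e > 0" and ne: "\<not> (\<forall>\<^sub>F l in sequentially. dist (f (z l)) fs < e)"
          unfolding tendsto_iff by blast
        have "infinite {l. \<not> dist (f (z l)) fs < e}"
          using ne unfolding cofinite_eq_sequentially[symmetric] eventually_cofinite by blast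
        then obtain r :: "nat \<Rightarrow> nat" where r: "strict_mono r" and rS: "\<And>n. \<not> dist (f (z (r n))) fs < e"
          using infinite_enumerate by blast
        have "bounded (range (z \<circ> r))" using bdd by (rule bounded_subset) auto
        then obtain zb and r' :: "nat \<Rightarrow> nat" where r': "strict_mono r'" and zr': "((z \<circ> r) \<circ> r') \<longlonglongrightarrow> zb"
          using bounded_imp_convergent_subsequence by blast
        have rr: "strict_mono (r \<circ> r')" using strict_mono_o[OF r r'] .
        have zr2: "(z \<circ> (r \<circ> r')) \<longlonglongrightarrow> zb" using zr' by (simp add: o_assoc)
        from OPT[OF rr zr2] have zbD: "zb \<in> feas lo hi a \<beta>" and fz: "f zb = fs" by (auto simp: fs_def)
        have "(\<lambda>k. f ((z \<circ> (r \<circ> r')) k)) \<longlonglongrightarrow> f zb"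
          by (rule isCont_tendsto_compose[OF fcont[OF zbD] zr2])
        hence "\<forall>\<^sub>F k in sequentially. dist (f (z (r (r' k)))) fs < e"
          using e fz unfolding tendsto_iff by (simp add: o_def)
        then obtain k where "dist (f (z (r (r' k)))) fs < e" by (auto simp: eventually_sequentially)
        thus False using rS by blast
      qed
      show ?thesis using conv OPT unfolding fs_def by blast
    qed
    show "(\<exists>zb r. strict_mono r \<and> (z \<circ> r) \<longlonglongrightarrow> zb) \<and>
        (\<forall>zb r. strict_mono r \<and> (z \<circ> r) \<longlonglongrightarrow> zb \<longrightarrow>
            zb \<in> feas lo hi a \<beta> \<and>
            (\<exists>gb\<in>clarke_subdiff f zb. \<forall>x\<in>feas lo hi a \<beta>. inner gb (x - zb) \<ge> 0)) \<and>
        (semiconvex_on f (boxset lo hi) \<longrightarrow>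
            (\<lambda>l. f (z l)) \<longlonglongrightarrow> (INF x\<in>feas lo hi a \<beta>. f x) \<and>
            (\<forall>zb r. strict_mono r \<and> (z \<circ> r) \<longlonglongrightarrow> zb \<longrightarrow>
               zb \<in> feas lo hi a \<beta> \<and> f zb = (INF x\<in>feas lo hi a \<beta>. f x)))"
      using EX LIM P3 by blast
  qed
  ultimately show ?thesis by blast
qed

end
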